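(* Let $\beta>0$ and let $(\lambda_n)_{n\in\mathbb{N}_0}$ be complex numbers with $\limsup_{n\to\infty}|\lambda_n|/n\le\beta$. Let $(a_n)_{n\in\mathbb{N}_0}$ be complex numbers and define $R^*\in[0,\infty]$ by $\frac{1}{R^*}=\limsup_{n\to\infty}\sqrt[n]{|a_n|/n!}$. If $R^*>0$, then for every $x_0\in\mathbb{C}$ the series $\sum_{n=0}^\infty a_n\Phi_{\Lambda_n}(z-x_0)$ converges absolutely and uniformly on compact subsets of the open disc with center $x_0$ and radius $\frac1\beta\ln(1+\beta R^* )$ (interpreted as $\infty$ if $R^*=\infty$).
   Context: For $\lambda_0,\dots,\lambda_n\in\mathbb{C}$ the fundamental function is the entire function $\Phi_{(\lambda_0,\dots,\lambda_n)}(z)=\frac{1}{2\pi i}\int_{|w|=R}\frac{e^{zw}}{(w-\lambda_0)\cdots(w-\lambda_n)}\,dw$, where $R>\max_j|\lambda_j|$ and the circle is positively oriented. For a sequence $(\lambda_n)$, $\Lambda_n=(\lambda_0,\dots,\lambda_n)$ and $\Phi_{\Lambda_n}=\Phi_{(\lambda_0,\dots,\lambda_n)}$. *)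

theory Defs
  imports "HOL-Analysis.Analysis" "HOL-Library.Extended_Real"
begin

text \<open>Fundamental function of a finite list of complex numbers, defined by the contour
integral over the positively oriented circle of radius R around 0, written out via the
parametrisation w(t) = R e^{it}, t in [0, 2 pi]. We take the specific radius
R = 1 + sum of the moduli, which exceeds the maximal modulus (the value of the integral
does not depend on the admissible radius).\<close>

definition fund_radius :: "complex list \<Rightarrow> real" where
  "fund_radius ls = 1 + sum_list (map norm ls)"

definition fund_fun :: "complex list \<Rightarrow> complex \<Rightarrow> complex" where
  "fund_fun ls z =
     (let R = fund_radius ls;
          w = (\<lambda>t::real. complex_of_real R * exp (\<i> * complex_of_real t))
      in (1 / (2 * complex_of_real pi * \<i>)) *
         integral {0..2*pi}
           (\<lambda>t. exp (z * w t) / (\<Prod>l\<leftarrow>ls. (w t - l)) * (\<i> * w t)))"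

definition Phi_seq :: "(nat \<Rightarrow> complex) \<Rightarrow> nat \<Rightarrow> complex \<Rightarrow> complex" where
  "Phi_seq lam n = fund_fun (map lam [0..<Suc n])"

end

theory Submission
  imports Defs
begin

fun PP :: "'a::comm_ring_1 list \<Rightarrow> nat \<Rightarrow> 'a" where
  "PP [] k = 0"
| "PP (l#ls) 0 = (if ls = [] then 1 else 0)"
| "PP (l#ls) (Suc k) = l * PP (l#ls) k + PP ls k"

lemma PP_single: "PP [l] k = l ^ k"
  by (induction k) auto

lemma PP_cons_Suc:
  assumes "ls \<noteq> []"
  shows "PP (l#ls) (Suc k) = (\<Sum>i\<le>k. l^i * PP ls (k - i))"
proof (induction k)
  case 0
  then show ?case using assms by simp
next
  case (Suc k)
  have "PP (l#ls) (Suc (Suc k)) = l * (\<Sum>i\<le>k. l^i * PP ls (k - i)) + PP ls (Suc k)"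
    using Suc by simp
  also have "\<dots> = (\<Sum>i\<le>k. l^(Suc i) * PP ls (Suc k - Suc i)) + l^0 * PP ls (Suc k - 0)"
    by (simp add: sum_distrib_left mult.assoc)
  also have "\<dots> = (\<Sum>i\<le>Suc k. l^i * PP ls (Suc k - i))"
    by (subst sum.atMost_Suc_shift) simp
  finally show ?case .
qed

lemma PP_series:
  fixes w :: complex
  assumes "ls \<noteq> []" "\<And>l. l \<in> set ls \<Longrightarrow> norm l < norm w"
  shows "summable (\<lambda>k. norm (PP ls k / w^(k+1))) \<and>
         (\<lambda>k. PP ls k / w^(k+1)) sums (1 / (\<Prod>l\<leftarrow>ls. (w - l)))"
  using assms
proof (induction ls)
  case Nil
  then show ?case by simp
next
  case (Cons l ls)
  have lw: "norm l < norm w" using Cons.prems by simp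
  then have w0: "w \<noteq> 0" by auto
  have wl: "w - l \<noteq> 0" using lw by auto
  have q: "norm (l / w) < 1" using lw w0 by (simp add: norm_divide divide_less_eq)
  have geo: "(\<lambda>k. l^k / w^(k+1)) sums (1 / (w - l))"
  proof -
    have "(\<lambda>k. (l/w)^k) sums (1 / (1 - l/w))" using geometric_sums[OF q] .
    then have "(\<lambda>k. (l/w)^k / w) sums (1 / (1 - l/w) / w)" by (rule sums_divide)
    moreover have "1 / (1 - l/w) / w = 1 / (w - l)" using w0 wl by (simp add: field_simps)
    moreover have "(l/w)^k / w = l^k / w^(k+1)" for k by (simp add: power_divide)
    ultimately show ?thesis by simp
  qed
  have geon: "summable (\<lambda>k. norm (l^k / w^(k+1)))"
  proof -
    have "summable (\<lambda>k. norm (l/w)^k / norm w)"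
      using q by (intro summable_divide summable_geometric) simp
    moreover have "norm (l^k / w^(k+1)) = norm (l/w)^k / norm w" for k
      by (simp add: norm_divide norm_power power_divide norm_mult)
    ultimately show ?thesis by simp
  qed
  show ?case
  proof (cases "ls = []")
    case True
    then show ?thesis using geo geon by (simp add: PP_single)
  next
    case False
    have IH: "summable (\<lambda>k. norm (PP ls k / w^(k+1)))"
      "(\<lambda>k. PP ls k / w^(k+1)) sums (1 / (\<Prod>l\<leftarrow>ls. (w - l)))"
      using Cons.IH[OF False] Cons.prems by auto
    define a where "a = (\<lambda>k. l^k / w^(k+1))"
    define b where "b = (\<lambda>k. PP ls k / w^(k+1))"
    have eq: "(\<Sum>i\<le>k. a i * b (k - i)) = PP (l#ls) (Suc k) / w^(Suc k + 1)" for k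
    proof -
      have "(\<Sum>i\<le>k. a i * b (k - i)) = (\<Sum>i\<le>k. l^i * PP ls (k - i) / w^(k+2))"
      proof (rule sum.cong)
        fix i assume "i \<in> {..k}"
        then have "w^(i+1) * w^(k-i+1) = w^(k+2)"
          by (simp add: power_add[symmetric])
        then show "a i * b (k - i) = l^i * PP ls (k - i) / w^(k+2)"
          unfolding a_def b_def by (simp add: field_simps)
      qed simp
      also have "\<dots> = PP (l#ls) (Suc k) / w^(Suc k + 1)"
        using PP_cons_Suc[OF False] by (simp add: sum_divide_distrib)
      finally show ?thesis .
    qed
    have an: "summable (\<lambda>k. norm (a k))" using geon a_def by simp
    have bn: "summable (\<lambda>k. norm (b k))" using IH b_def by simp
    have cs: "(\<lambda>k. \<Sum>i\<le>k. a i * b (k - i)) sums ((\<Sum>k. a k) * (\<Sum>k. b k))"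
      by (rule Cauchy_product_sums[OF an bn])
    have sa: "(\<Sum>k. a k) = 1 / (w - l)" using geo a_def sums_unique by metis
    have sb: "(\<Sum>k. b k) = 1 / (\<Prod>l\<leftarrow>ls. (w - l))" using IH b_def sums_unique by metis
    have s1: "(\<lambda>k. PP (l#ls) (Suc k) / w^(Suc k + 1)) sums (1 / (\<Prod>l\<leftarrow>l#ls. (w - l)))"
      using cs eq sa sb by simp
    have s2: "(\<lambda>k. PP (l#ls) k / w^(k + 1)) sums (1 / (\<Prod>l\<leftarrow>l#ls. (w - l)))"
      using s1 False sums_Suc_iff[of "\<lambda>k. PP (l#ls) k / w^(k + 1)"] by simp
    have "summable (\<lambda>k. \<Sum>i\<le>k. norm (a i) * norm (b (k - i)))"
      using summable_Cauchy_product[of "\<lambda>k. norm (a k)" "\<lambda>k. norm (b k)"] an bn by simp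
    then have "summable (\<lambda>k. norm (PP (l#ls) (Suc k) / w^(Suc k + 1)))"
    proof (rule summable_comparison_test'[where N=0])
      fix k
      have "norm (PP (l#ls) (Suc k) / w^(Suc k + 1)) = norm (\<Sum>i\<le>k. a i * b (k - i))"
        by (simp add: eq)
      also have "\<dots> \<le> (\<Sum>i\<le>k. norm (a i) * norm (b (k - i)))"
        by (rule order_trans[OF norm_sum]) (simp add: norm_mult)
      finally show "norm (norm (PP (l#ls) (Suc k) / w^(Suc k + 1))) \<le> (\<Sum>i\<le>k. norm (a i) * norm (b (k - i)))"
        by simp
    qed
    then have "summable (\<lambda>k. norm (PP (l#ls) k / w^(k + 1)))"
      by (subst summable_Suc_iff[symmetric])
    with s2 show ?thesis by simp
  qed
qed

lemma int_series:
  fixes f :: "nat \<Rightarrow> real \<Rightarrow> complex"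
  assumes cont: "\<And>n. continuous_on {a..b} (f n)"
    and bd: "\<And>n t. t \<in> {a..b} \<Longrightarrow> norm (f n t) \<le> M n" and sm: "summable M"
  shows "\<exists>I. (\<lambda>n. integral {a..b} (f n)) sums I \<and> ((\<lambda>t. \<Sum>n. f n t) has_integral I) {a..b}"
proof -
  have U: "uniform_limit (cbox a b) (\<lambda>N t. \<Sum>n<N. f n t) (\<lambda>t. \<Sum>n. f n t) sequentially"
    using Weierstrass_m_test[of "cbox a b" f M] bd sm by auto
  have C: "continuous_on (cbox a b) (\<lambda>t. \<Sum>n<N. f n t)" for N
    using cont by (auto intro!: continuous_on_sum)
  obtain I J where IJ: "\<And>N. ((\<lambda>t. \<Sum>n<N. f n t) has_integral I N) (cbox a b)"
    "((\<lambda>t. \<Sum>n. f n t) has_integral J) (cbox a b)" "(I \<longlongrightarrow> J) sequentially"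
    using uniform_limit_integral_cbox[OF U C] by auto
  have fi: "(f n has_integral integral {a..b} (f n)) {a..b}" for n
    using cont integrable_continuous_real integrable_integral by blast
  have "I = (\<lambda>N. \<Sum>n<N. integral {a..b} (f n))"
  proof (rule ext)
    fix N
    have "((\<lambda>t. \<Sum>n<N. f n t) has_integral (\<Sum>n<N. integral {a..b} (f n))) {a..b}"
      using fi by (intro has_integral_sum) auto
    then show "I N = (\<Sum>n<N. integral {a..b} (f n))" using IJ(1)[of N] has_integral_unique by (metis cbox_interval)
  qed
  then have "(\<lambda>n. integral {a..b} (f n)) sums J" using IJ(3) unfolding sums_def by simp
  then show ?thesis using IJ(2) by (auto simp: cbox_interval)
qed

definition circ :: "real \<Rightarrow> real \<Rightarrow> complex" where
  "circ R t = complex_of_real R * exp (\<i> * complex_of_real t)"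

lemma circ_pow_div:
  assumes "R > 0"
  shows "circ R t ^ j / circ R t ^ k =
     complex_of_real (R^j / R^k) * exp (\<i> * of_int (int j - int k) * complex_of_real t)"
proof -
  have e: "exp (\<i> * complex_of_real t) ^ n = exp (of_nat n * (\<i> * complex_of_real t))" for n
    by (simp add: exp_of_nat_mult)
  have "exp (\<i> * of_int (int j - int k) * complex_of_real t) =
        exp (of_nat j * (\<i> * complex_of_real t)) / exp (of_nat k * (\<i> * complex_of_real t))"
    by (simp add: exp_diff[symmetric] algebra_simps)
  then show ?thesis using assms
    by (simp add: circ_def power_mult_distrib e)
qed

lemma fourier:
  fixes m :: int
  assumes "m \<noteq> 0"
  shows "((\<lambda>t. exp (\<i> * of_int m * complex_of_real t)) has_integral 0) {0..2*pi}"
proof -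
  let ?c = "\<i> * of_int m :: complex"
  have c0: "?c \<noteq> 0" using assms by simp
  define F where "F = (\<lambda>u::complex. exp (?c * u) / ?c)"
  have D: "(F has_field_derivative exp (?c * u)) (at u)" for u
    unfolding F_def using c0 by (auto intro!: derivative_eq_intros)
  have "((\<lambda>t. exp (?c * complex_of_real t)) has_integral
          (F (of_real (2*pi)) - F (of_real 0))) {0..2*pi}"
    by (rule fundamental_theorem_of_calculus) (auto intro!: has_vector_derivative_real_field D)
  moreover have "F (of_real (2*pi)) - F (of_real 0) = 0"
  proof -
    have "exp (?c * of_real (2*pi)) = exp ((2 * of_int m * pi) * \<i>)"
      by (simp add: algebra_simps)
    also have "\<dots> = 1" by (rule exp_integer_2pi) simp
    finally show ?thesis by (simp add: F_def)
  qed
  ultimately show ?thesis by simp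
qed

lemma norm_circ: "R > 0 \<Longrightarrow> norm (circ R t) = R"
  by (simp add: circ_def norm_mult)

lemma circ_nz: "R > 0 \<Longrightarrow> circ R t \<noteq> 0"
  by (simp add: circ_def)

lemma Jk:
  fixes z :: complex
  assumes R: "R > 0"
  shows "((\<lambda>t. exp (z * circ R t) / circ R t ^ k) has_integral (2 * pi * z^k / fact k)) {0..2*pi}"
proof -
  define f where "f = (\<lambda>j t. z^j / fact j * (circ R t ^ j / circ R t ^ k))"
  define M where "M = (\<lambda>j. (norm z * R)^j / fact j / R^k)"
  have cont: "continuous_on {0..2*pi} (f j)" for j
    unfolding f_def circ_def using R by (auto intro!: continuous_intros)
  have bd: "norm (f j t) \<le> M j" for j t
    unfolding f_def M_def using R
    by (simp add: norm_mult norm_divide norm_power norm_circ power_mult_distrib)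
  have sm: "summable M"
  proof -
    have "summable (\<lambda>j. (norm z * R)^j /\<^sub>R fact j)"
      using exp_converges[of "norm z * R"] sums_summable by blast
    then have "summable (\<lambda>j. (norm z * R)^j / fact j / R^k)"
      by (intro summable_divide) (simp add: divide_inverse_commute)
    then show ?thesis by (simp add: M_def)
  qed
  obtain I where I: "(\<lambda>j. integral {0..2*pi} (f j)) sums I"
    "((\<lambda>t. \<Sum>j. f j t) has_integral I) {0..2*pi}"
    using int_series[OF cont bd sm] by blast
  have ptw: "(\<Sum>j. f j t) = exp (z * circ R t) / circ R t ^ k" for t
  proof -
    have "(\<lambda>j. (z * circ R t)^j /\<^sub>R fact j) sums exp (z * circ R t)"
      by (rule exp_converges)
    then have "(\<lambda>j. (z * circ R t)^j /\<^sub>R fact j / circ R t ^ k) sums (exp (z * circ R t) / circ R t ^ k)"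
      by (rule sums_divide)
    moreover have "(z * circ R t)^j /\<^sub>R fact j / circ R t ^ k = f j t" for j
      by (simp add: f_def scaleR_conv_of_real power_mult_distrib field_simps)
    ultimately show ?thesis using sums_unique by fastforce
  qed
  have intf: "integral {0..2*pi} (f j) = (if j = k then 2 * pi * z^k / fact k else 0)" for j
  proof (cases "j = k")
    case True
    then have "f j = (\<lambda>t. z^k / fact k)" using circ_nz[OF R] by (auto simp: f_def)
    then show ?thesis using True by (simp add: scaleR_conv_of_real)
  next
    case False
    have "f j = (\<lambda>t. (z^j / fact j * complex_of_real (R^j / R^k)) *
                   exp (\<i> * of_int (int j - int k) * complex_of_real t))"
      by (rule ext) (simp add: f_def circ_pow_div[OF R])
    moreover have "((\<lambda>t. (z^j / fact j * complex_of_real (R^j / R^k)) *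
                   exp (\<i> * of_int (int j - int k) * complex_of_real t)) has_integral 0) {0..2*pi}"
    proof -
      have "((\<lambda>t. exp (\<i> * of_int (int j - int k) * complex_of_real t)) has_integral 0) {0..2*pi}"
        using fourier[of "int j - int k"] False by simp
      from has_integral_mult_right[OF this, of "z^j / fact j * complex_of_real (R^j / R^k)"]
      show ?thesis by (simp only: mult_zero_right)
    qed
    ultimately show ?thesis using False by (metis (no_types, lifting) integral_unique)
  qed
  have "(\<lambda>j. integral {0..2*pi} (f j)) sums (2 * pi * z^k / fact k)"
  proof -
    have "(\<lambda>j. if j = k then 2 * pi * z^k / fact k else 0) = (\<lambda>j. if j = k then (\<lambda>j. 2 * pi * z^j / fact j) j else 0)"
      by auto
    then show ?thesis unfolding intf using sums_single[of k "\<lambda>j. 2 * pi * z^j / fact j"] by simp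
  qed
  then have "I = 2 * pi * z^k / fact k" using I(1) sums_unique2 by blast
  then show ?thesis using I(2) ptw by simp
qed

lemma norm_le_sum_list: "l \<in> set ls \<Longrightarrow> norm l \<le> sum_list (map norm ls)"
proof (induction ls)
  case Nil then show ?case by simp
next
  case (Cons x xs)
  have "0 \<le> sum_list (map norm xs)" by (induction xs) auto
  then show ?case using Cons by (auto intro: add_increasing)
qed

lemma fund_fun_series:
  fixes z :: complex
  assumes ne: "ls \<noteq> []"
  shows "(\<lambda>k. PP ls k * z^k / fact k) sums fund_fun ls z"
proof -
  define R where "R = fund_radius ls"
  have Rs: "norm l < R" if "l \<in> set ls" for l
    using norm_le_sum_list[OF that] by (simp add: R_def fund_radius_def)
  have R0: "R > 0" using Rs ne by (meson list.set_sel(1) norm_ge_zero order.strict_trans1)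
  have ff: "fund_fun ls z = (1 / (2 * complex_of_real pi * \<i>)) *
      integral {0..2*pi} (\<lambda>t. exp (z * circ R t) / (\<Prod>l\<leftarrow>ls. (circ R t - l)) * (\<i> * circ R t))"
    by (simp add: fund_fun_def R_def circ_def Let_def)
  define f where "f = (\<lambda>k t. \<i> * PP ls k * (exp (z * circ R t) / circ R t ^ k))"
  define M where "M = (\<lambda>k. exp (norm z * R) * R * norm (PP ls k / (complex_of_real R)^(k+1)))"
  have cont: "continuous_on {0..2*pi} (f k)" for k
    unfolding f_def circ_def using R0 by (auto intro!: continuous_intros)
  have bd: "norm (f k t) \<le> M k" for k t
  proof -
    have "norm (exp (z * circ R t)) \<le> exp (norm z * R)"
      using norm_exp[of "z * circ R t"] R0 by (simp add: norm_mult norm_circ)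
    then have "norm (f k t) \<le> norm (PP ls k) * exp (norm z * R) / R^k"
      unfolding f_def using R0
      by (simp add: norm_mult norm_divide norm_power norm_circ divide_right_mono mult_left_mono)
    also have "\<dots> = M k" using R0 by (simp add: M_def norm_divide norm_power norm_mult field_simps)
    finally show ?thesis .
  qed
  have sm: "summable M"
  proof -
    have "summable (\<lambda>k. norm (PP ls k / (complex_of_real R)^(k+1)))"
      using PP_series[OF ne, of "complex_of_real R"] Rs R0 by simp
    then show ?thesis unfolding M_def by (intro summable_mult)
  qed
  obtain I where I: "(\<lambda>k. integral {0..2*pi} (f k)) sums I"
    "((\<lambda>t. \<Sum>k. f k t) has_integral I) {0..2*pi}"
    using int_series[OF cont bd sm] by blast
  have ptw: "(\<Sum>k. f k t) = exp (z * circ R t) / (\<Prod>l\<leftarrow>ls. (circ R t - l)) * (\<i> * circ R t)" for t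
  proof -
    have "(\<lambda>k. PP ls k / (circ R t)^(k+1)) sums (1 / (\<Prod>l\<leftarrow>ls. (circ R t - l)))"
      using PP_series[OF ne, of "circ R t"] Rs R0 by (simp add: norm_circ)
    then have "(\<lambda>k. PP ls k / (circ R t)^(k+1) * (exp (z * circ R t) * (\<i> * circ R t))) sums
        (1 / (\<Prod>l\<leftarrow>ls. (circ R t - l)) * (exp (z * circ R t) * (\<i> * circ R t)))"
      by (rule sums_mult2)
    moreover have "PP ls k / (circ R t)^(k+1) * (exp (z * circ R t) * (\<i> * circ R t)) = f k t" for k
      using circ_nz[OF R0] by (simp add: f_def field_simps)
    ultimately show ?thesis using sums_unique by fastforce
  qed
  have intf: "integral {0..2*pi} (f k) = \<i> * PP ls k * (2 * pi * z^k / fact k)" for k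
    unfolding f_def using has_integral_mult_right[OF Jk[OF R0, of z k], of "\<i> * PP ls k"]
    by (simp add: integral_unique)
  have "integral {0..2*pi} (\<lambda>t. exp (z * circ R t) / (\<Prod>l\<leftarrow>ls. (circ R t - l)) * (\<i> * circ R t)) = I"
    using I(2) ptw by (simp add: integral_unique)
  then have fI: "fund_fun ls z = (1 / (2 * complex_of_real pi * \<i>)) * I" using ff by simp
  have "(\<lambda>k. (1 / (2 * complex_of_real pi * \<i>)) * integral {0..2*pi} (f k)) sums
          ((1 / (2 * complex_of_real pi * \<i>)) * I)"
    using I(1) by (rule sums_mult)
  moreover have "(1 / (2 * complex_of_real pi * \<i>)) * integral {0..2*pi} (f k) = PP ls k * z^k / fact k" for k
    unfolding intf by (simp add: field_simps)
  ultimately show ?thesis using fI by simp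
qed

lemma PP_norm_le:
  fixes ls :: "complex list" and cs :: "real list"
  assumes "list_all2 (\<lambda>l c. norm l \<le> c) ls cs"
  shows "norm (PP ls k) \<le> PP cs k"
  using assms
proof (induction ls arbitrary: cs k)
  case Nil
  then show ?case by simp
next
  case (Cons l ls)
  obtain c cs' where cs: "cs = c # cs'" and lc: "norm l \<le> c" and r: "list_all2 (\<lambda>l c. norm l \<le> c) ls cs'"
    using Cons.prems by (cases cs) auto
  have e: "ls = [] \<longleftrightarrow> cs' = []" using r list_all2_lengthD by fastforce
  show ?case unfolding cs
  proof (induction k)
    case 0
    then show ?case using e by simp
  next
    case (Suc k)
    have "norm (PP (l#ls) (Suc k)) \<le> norm l * norm (PP (l#ls) k) + norm (PP ls k)"
      by (simp add: norm_mult order_trans[OF norm_triangle_ineq])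
    also have "\<dots> \<le> c * PP (c#cs') k + PP cs' k"
      using Suc.IH Cons.IH[OF r, of k] lc order_trans[OF norm_ge_zero lc] by (intro add_mono mult_mono) auto
    finally show ?case by simp
  qed
qed

definition AA :: "real \<Rightarrow> real \<Rightarrow> nat \<Rightarrow> nat \<Rightarrow> real" where
  "AA C b n k = (\<Sum>i\<le>n. of_nat (n choose i) * (-1)^(n-i) * (C + real i * b)^k)"

lemma AA_0: "AA C b (Suc m) 0 = 0"
proof -
  have "(-1 + 1 :: real)^(Suc m) = (\<Sum>i\<le>Suc m. of_nat (Suc m choose i) * 1^i * (-1)^(Suc m-i))"
    using binomial_ring[of "1::real" "-1" "Suc m"] by (simp add: add.commute)
  then show ?thesis by (simp add: AA_def)
qed

lemma AA_step:
  "AA C b (Suc m) (Suc k) = (C + real (Suc m) * b) * AA C b (Suc m) k + real (Suc m) * b * AA C b m k"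
proof -
  let ?c = "C + real (Suc m) * b"
  define T where "T = (\<lambda>i. if i \<le> m then real (Suc m) * b * (of_nat (m choose i) * (-1)^(m-i) * (C + real i * b)^k) else 0)"
  have tm: "of_nat (Suc m choose i) * (-1)^(Suc m-i) * (C + real i * b)^(Suc k) =
      ?c * (of_nat (Suc m choose i) * (-1)^(Suc m-i) * (C + real i * b)^k) + T i" if "i \<le> Suc m" for i
  proof (cases "i = Suc m")
    case True
    then show ?thesis by (simp add: T_def)
  next
    case False
    then have im: "i \<le> m" using that by simp
    have ab: "real (Suc m - i) * real (Suc m choose i) = real (Suc m) * real (m choose i)"
      using binomial_absorb_comp[of "Suc m" i] by (metis diff_Suc_1 of_nat_mult)
    have sd: "real (Suc m - i) = real (Suc m) - real i" using im by (simp add: of_nat_diff)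
    have sg: "(-1::real)^(Suc m - i) = - ((-1)^(m - i))" using im by (simp add: Suc_diff_le)
    have "of_nat (Suc m choose i) * (-1)^(Suc m-i) * (C + real i * b)^(Suc k) -
          ?c * (of_nat (Suc m choose i) * (-1)^(Suc m-i) * (C + real i * b)^k)
        = - (real (Suc m) - real i) * b * of_nat (Suc m choose i) * (-1)^(Suc m-i) * (C + real i * b)^k"
      by (simp add: algebra_simps)
    also have "\<dots> = (real (Suc m - i) * real (Suc m choose i)) * b * (-1)^(m-i) * (C + real i * b)^k"
      by (simp add: sd sg algebra_simps)
    also have "\<dots> = T i" unfolding ab T_def using im by simp
    finally show ?thesis by simp
  qed
  have "AA C b (Suc m) (Suc k) = (\<Sum>i\<le>Suc m. ?c * (of_nat (Suc m choose i) * (-1)^(Suc m-i) * (C + real i * b)^k) + T i)"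
    unfolding AA_def by (rule sum.cong) (use tm in auto)
  also have "\<dots> = ?c * AA C b (Suc m) k + (\<Sum>i\<le>Suc m. T i)"
    unfolding sum.distrib AA_def sum_distrib_left by simp
  also have "(\<Sum>i\<le>Suc m. T i) = real (Suc m) * b * AA C b m k"
    by (simp add: T_def AA_def sum_distrib_left)
  finally show ?thesis .
qed

lemma PP_arith:
  fixes C b :: real
  assumes b0: "b \<noteq> 0"
  defines "c \<equiv> (\<lambda>j. C + real j * b)"
  shows "PP (rev (map c [0..<Suc n])) k = AA C b n k / (fact n * b^n)"
proof (induction n arbitrary: k)
  case 0
  then show ?case by (simp add: PP_single AA_def c_def)
next
  case (Suc m)
  note IHo = Suc.IH
  have rv: "rev (map c [0..<Suc (Suc m)]) = c (Suc m) # rev (map c [0..<Suc m])" by simp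
  show ?case
  proof (induction k)
    case 0
    then show ?case unfolding rv by (simp add: AA_0)
  next
    case (Suc k)
    have "PP (rev (map c [0..<Suc (Suc m)])) (Suc k) =
        c (Suc m) * PP (rev (map c [0..<Suc (Suc m)])) k + PP (rev (map c [0..<Suc m])) k"
      unfolding rv by simp
    also have "\<dots> = c (Suc m) * (AA C b (Suc m) k / (fact (Suc m) * b^(Suc m))) + AA C b m k / (fact m * b^m)"
      using Suc.IH IHo by simp
    also have "\<dots> = AA C b (Suc m) (Suc k) / (fact (Suc m) * b^(Suc m))"
    proof -
      define D where "D = fact m * b^m"
      have D0: "D \<noteq> 0" using b0 by (simp add: D_def)
      have fD: "fact (Suc m) * b^(Suc m) = (real (Suc m) * b) * D"
        by (simp add: D_def algebra_simps)
      have s0: "real (Suc m) * b \<noteq> 0" using b0 by simp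
      show ?thesis unfolding AA_step fD c_def
        unfolding D_def[symmetric] using D0 s0
        by (simp add: divide_simps)
    qed
    finally show ?case .
  qed
qed

lemma AA_series:
  fixes C b r :: real
  shows "(\<lambda>k. AA C b n k * r^k / fact k) sums (exp (C*r) * (exp (b*r) - 1)^n)"
proof -
  define co where "co = (\<lambda>i. of_nat (n choose i) * (-1::real)^(n-i))"
  have "(\<lambda>k. \<Sum>i\<le>n. co i * (((C + real i * b) * r)^k / fact k)) sums (\<Sum>i\<le>n. co i * exp ((C + real i * b) * r))"
  proof (rule sums_sum)
    fix i
    have "(\<lambda>k. ((C + real i * b) * r)^k /\<^sub>R fact k) sums exp ((C + real i * b) * r)"
      by (rule exp_converges)
    then have "(\<lambda>k. ((C + real i * b) * r)^k / fact k) sums exp ((C + real i * b) * r)"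
      by (simp add: divide_inverse_commute)
    then show "(\<lambda>k. co i * (((C + real i * b) * r)^k / fact k)) sums (co i * exp ((C + real i * b) * r))"
      by (rule sums_mult)
  qed
  moreover have "(\<Sum>i\<le>n. co i * (((C + real i * b) * r)^k / fact k)) = AA C b n k * r^k / fact k" for k
    unfolding AA_def co_def by (simp add: sum_distrib_right sum_divide_distrib power_mult_distrib mult.assoc)
  moreover have "(\<Sum>i\<le>n. co i * exp ((C + real i * b) * r)) = exp (C*r) * (exp (b*r) - 1)^n"
  proof -
    have "(exp (b*r) + -1)^n = (\<Sum>i\<le>n. of_nat (n choose i) * exp (b*r)^i * (-1)^(n-i))"
      by (rule binomial_ring)
    moreover have "exp ((C + real i * b) * r) = exp (C*r) * exp (b*r)^i" for i
      by (simp add: exp_add[symmetric] exp_of_nat_mult[symmetric] algebra_simps)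
    ultimately show ?thesis unfolding co_def
      by (simp add: sum_distrib_left algebra_simps)
  qed
  ultimately show ?thesis by simp
qed

lemma fund_fun_rev: "fund_fun (rev ls) = fund_fun ls"
proof -
  have 1: "fund_radius (rev ls) = fund_radius ls" by (simp add: fund_radius_def rev_map[symmetric])
  have 2: "\<And>f::complex\<Rightarrow>complex. prod_list (map f (rev ls)) = prod_list (map f ls)" by (simp add: rev_map[symmetric] prod_list.rev)
  show ?thesis unfolding fund_fun_def 1 2 ..
qed

lemma Phi_bound:
  fixes lam :: "nat \<Rightarrow> complex" and b C r :: real and z :: complex
  assumes b: "b > 0" and lam: "\<And>j. norm (lam j) \<le> C + real j * b" and z: "norm z \<le> r"
  shows "norm (Phi_seq lam n z) \<le> exp (C*r) * (exp (b*r) - 1)^n / (fact n * b^n)"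
proof -
  define ls where "ls = rev (map lam [0..<Suc n])"
  define c where "c = (\<lambda>j. C + real j * b)"
  define cs where "cs = rev (map c [0..<Suc n])"
  have ne: "ls \<noteq> []" by (simp add: ls_def)
  have Phi: "Phi_seq lam n z = fund_fun ls z"
    by (simp only: Phi_seq_def ls_def fund_fun_rev)
  have S: "(\<lambda>k. PP ls k * z^k / fact k) sums Phi_seq lam n z"
    using fund_fun_series[OF ne] Phi by simp
  have la: "list_all2 (\<lambda>l c. norm l \<le> c) ls cs"
    by (simp only: ls_def cs_def list_all2_rev) (simp add: list_all2_conv_all_nth c_def lam del: upt_Suc)
  have r0: "0 \<le> r" using z norm_ge_zero order_trans by blast
  have tb: "norm (PP ls k * z^k / fact k) \<le> AA C b n k / (fact n * b^n) * r^k / fact k" for k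
  proof -
    have p: "norm (PP ls k) \<le> PP cs k" by (rule PP_norm_le[OF la])
    have "norm (PP ls k * z^k / fact k) = norm (PP ls k) * norm z^k / fact k"
      by (simp add: norm_mult norm_divide norm_power)
    also have "\<dots> \<le> PP cs k * r^k / fact k"
      using p z by (intro divide_right_mono mult_mono power_mono) (auto intro: order_trans[OF norm_ge_zero p])
    also have "PP cs k = AA C b n k / (fact n * b^n)"
      using PP_arith[of b C n k] b by (simp add: cs_def c_def)
    finally show ?thesis .
  qed
  have G: "(\<lambda>k. AA C b n k / (fact n * b^n) * r^k / fact k) sums (exp (C*r) * (exp (b*r) - 1)^n / (fact n * b^n))"
    using sums_divide[OF AA_series[where C=C and b=b and r=r and n=n], of "fact n * b^n"] by (simp add: field_simps)
  have "norm (\<Sum>k. PP ls k * z^k / fact k) \<le> (\<Sum>k. AA C b n k / (fact n * b^n) * r^k / fact k)"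
    by (rule norm_suminf_le[OF tb]) (use G sums_summable in blast)
  then show ?thesis using S G by (simp add: sums_iff)
qed

lemma choose_b:
  fixes \<beta> r R1 :: real
  assumes "\<beta> > 0" "(exp (\<beta>*r) - 1) / \<beta> < R1"
  shows "\<exists>b>\<beta>. (exp (b*r) - 1) / b < R1"
proof -
  have "isCont (\<lambda>x. (exp (x*r) - 1) / x) \<beta>"
    using assms(1) by (intro continuous_intros) auto
  then have "((\<lambda>x. (exp (x*r) - 1) / x) \<longlongrightarrow> (exp (\<beta>*r) - 1) / \<beta>) (at \<beta>)"
    by (simp add: isCont_def)
  then have "eventually (\<lambda>x. (exp (x*r) - 1) / x < R1) (at \<beta>)"
    using assms(2) by (rule order_tendstoD(2))
  then obtain d where d: "d > 0" "\<And>x. x \<noteq> \<beta> \<Longrightarrow> dist x \<beta> < d \<Longrightarrow> (exp (x*r) - 1) / x < R1"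
    unfolding eventually_at by blast
  show ?thesis
    by (rule exI[of _ "\<beta> + d/2"]) (use d in \<open>auto simp: dist_real_def\<close>)
qed

theorem mainTheorem7:
  fixes lam a :: "nat \<Rightarrow> complex" and \<beta> :: real and Rstar :: ereal and x0 :: complex
  assumes beta_pos: "\<beta> > 0"
    and lam_growth: "limsup (\<lambda>n. ereal (cmod (lam n) / real n)) \<le> ereal \<beta>"
    and Rstar_def: "Rstar = inverse (limsup (\<lambda>n. ereal (root n (cmod (a n) / fact n))))"
    and Rstar_pos: "Rstar > 0"
  shows "\<forall>K. compact K \<and>
             K \<subseteq> (if Rstar = \<infinity> then UNIV
                   else ball x0 (ln (1 + \<beta> * real_of_ereal Rstar) / \<beta>)) \<longrightarrow>
           uniformly_convergent_on K (\<lambda>N z. \<Sum>n<N. cmod (a n * Phi_seq lam n (z - x0))) \<and>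
           uniformly_convergent_on K (\<lambda>N z. \<Sum>n<N. a n * Phi_seq lam n (z - x0))"
proof (intro allI impI, elim conjE)
  fix K :: "complex set"
  assume Kc: "compact K" and Ks: "K \<subseteq> (if Rstar = \<infinity> then UNIV
                   else ball x0 (ln (1 + \<beta> * real_of_ereal Rstar) / \<beta>))"
  define \<rho> where "\<rho> = ln (1 + \<beta> * real_of_ereal Rstar) / \<beta>"
  have Rs0: "real_of_ereal Rstar \<ge> 0" using Rstar_pos by (simp add: real_of_ereal_pos)
  have rho0: "\<rho> \<ge> 0" unfolding \<rho>_def using beta_pos Rs0 by simp
  obtain r where r0: "r \<ge> 0" and rK: "\<And>z. z \<in> K \<Longrightarrow> norm (z - x0) \<le> r"
    and rrho: "Rstar \<noteq> \<infinity> \<Longrightarrow> r < \<rho>"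
  proof (cases "K = {}")
    case True
    show ?thesis
    proof (rule that[of 0])
      show "Rstar \<noteq> \<infinity> \<Longrightarrow> 0 < \<rho>"
      proof -
        assume "Rstar \<noteq> \<infinity>"
        then have "real_of_ereal Rstar > 0" using Rstar_pos
          by (cases Rstar) auto
        then show ?thesis unfolding \<rho>_def using beta_pos by (intro divide_pos_pos ln_gt_zero) auto
      qed
    qed (use True in auto)
  next
    case False
    have "continuous_on K (\<lambda>z. norm (z - x0))" by (intro continuous_intros)
    then obtain zm where zm: "zm \<in> K" "\<And>y. y \<in> K \<Longrightarrow> norm (y - x0) \<le> norm (zm - x0)"
      using continuous_attains_sup[OF Kc False] by blast
    show ?thesis
    proof (rule that[of "norm (zm - x0)"])
      show "Rstar \<noteq> \<infinity> \<Longrightarrow> norm (zm - x0) < \<rho>"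
        using Ks zm(1) by (auto simp: \<rho>_def dist_norm norm_minus_commute)
    qed (use zm in auto)
  qed
  obtain b R1 where b: "b > \<beta>" and R1h: "(exp (b*r) - 1) / b < R1" and R1R: "ereal R1 < Rstar"
  proof (cases "Rstar = \<infinity>")
    case True
    show ?thesis
      by (rule that[of "\<beta>+1" "(exp ((\<beta>+1)*r) - 1) / (\<beta>+1) + 1"]) (use True in auto)
  next
    case False
    then obtain R where R: "Rstar = ereal R" "R > 0" using Rstar_pos by (cases Rstar) auto
    have "\<beta> * r < \<beta> * \<rho>" using rrho[OF False] beta_pos by simp
    also have "\<beta> * \<rho> = ln (1 + \<beta> * R)" using beta_pos R by (simp add: \<rho>_def)
    finally have "exp (\<beta> * r) < 1 + \<beta> * R"
      using beta_pos R by (metis add_pos_pos exp_less_cancel_iff exp_ln mult_pos_pos zero_less_one)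
    then have T: "(exp (\<beta>*r) - 1) / \<beta> < R" using beta_pos by (simp add: divide_less_eq mult.commute)
    define T0 where "T0 = (exp (\<beta>*r) - 1) / \<beta>"
    define R1 where "R1 = (T0 + R) / 2"
    have "T0 < R1" using T unfolding R1_def T0_def[symmetric] by (simp add: field_simps)
    then have "(exp (\<beta>*r) - 1) / \<beta> < R1" unfolding T0_def .
    then obtain b where "b > \<beta>" "(exp (b*r) - 1) / b < R1" using choose_b[OF beta_pos] by blast
    moreover have "R1 < R" using T unfolding R1_def T0_def[symmetric] by (simp add: field_simps)
    then have "ereal R1 < Rstar" using R by simp
    ultimately show ?thesis using that by blast
  qed
  have b0: "b > 0" using b beta_pos by simp
  define h where "h = (exp (b*r) - 1) / b"
  have h0: "h \<ge> 0" unfolding h_def using b0 r0 by simp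
  have R10: "R1 > 0" using h0 R1h h_def by simp
  define L where "L = limsup (\<lambda>n. ereal (root n (cmod (a n) / fact n)))"
  have LR: "L < ereal (1/R1)"
  proof (cases L)
    case (real x)
    show ?thesis
    proof (cases "x = 0")
      case True then show ?thesis using real R10 by simp
    next
      case False
      then have "Rstar = ereal (inverse x)" using real Rstar_def L_def by simp
      then have "x > 0" "R1 < inverse x" using Rstar_pos R1R by (auto simp: inverse_positive_iff_positive)
      then show ?thesis using real R10 by (simp add: field_simps)
    qed
  next
    case PInf then show ?thesis using Rstar_def L_def Rstar_pos by simp
  next
    case MInf then show ?thesis using Rstar_def L_def Rstar_pos by simp
  qed
  have ev_a: "eventually (\<lambda>n. cmod (a n) / fact n \<le> (1/R1)^n) sequentially"
  proof -
    have "eventually (\<lambda>n. ereal (root n (cmod (a n) / fact n)) < ereal (1/R1)) sequentially"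
      using Limsup_lessD[OF LR[unfolded L_def]] .
    moreover have "eventually (\<lambda>n. n > 0) sequentially" by (rule eventually_gt_at_top)
    ultimately show ?thesis
    proof eventually_elim
      case (elim n)
      have x0: "cmod (a n) / fact n \<ge> 0" by simp
      have "root n (cmod (a n) / fact n) < 1/R1" using elim by simp
      then have "root n (cmod (a n) / fact n) ^ n \<le> (1/R1)^n"
        using elim x0 by (intro power_mono) (auto simp: real_root_ge_zero)
      then show ?case using real_root_pow_pos2[OF elim(2) x0] by simp
    qed
  qed
  have "eventually (\<lambda>n. ereal (cmod (lam n) / real n) < ereal b) sequentially"
  proof -
    have "limsup (\<lambda>n. ereal (cmod (lam n) / real n)) < ereal b"
      using lam_growth b by (meson ereal_less_eq(3) le_less_trans less_ereal.simps(1))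
    then show ?thesis by (rule Limsup_lessD)
  qed
  moreover have "eventually (\<lambda>n. n > 0) sequentially" by (rule eventually_gt_at_top)
  ultimately have "eventually (\<lambda>n. cmod (lam n) \<le> real n * b) sequentially"
  proof eventually_elim
    case (elim n)
    then show ?case by (simp add: divide_less_eq mult.commute less_imp_le)
  qed
  then obtain N where N: "\<And>n. n \<ge> N \<Longrightarrow> cmod (lam n) \<le> real n * b"
    unfolding eventually_sequentially by blast
  define C where "C = (\<Sum>j<N. cmod (lam j))"
  have C0: "C \<ge> 0" unfolding C_def by (simp add: sum_nonneg)
  have lamC: "cmod (lam j) \<le> C + real j * b" for j
  proof (cases "j < N")
    case True
    have "cmod (lam j) \<le> C" unfolding C_def
      using True by (intro member_le_sum) auto
    then show ?thesis using b0 by (simp add: add_increasing2)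
  next
    case False
    then show ?thesis using N[of j] C0 by simp
  qed
  define q where "q = h / R1"
  have hR: "h < R1" using R1h h_def by simp
  have q0: "q \<ge> 0" "q < 1" unfolding q_def using h0 R10 hR by auto
  define M where "M = (\<lambda>n. exp (C*r) * q^n)"
  have sM: "summable M" unfolding M_def using q0 by (intro summable_mult summable_geometric) auto
  have evb: "eventually (\<lambda>n. \<forall>z\<in>K. norm (a n * Phi_seq lam n (z - x0)) \<le> M n) sequentially"
    using ev_a
  proof eventually_elim
    case (elim n)
    show ?case
    proof
      fix z assume z: "z \<in> K"
      have P: "norm (Phi_seq lam n (z - x0)) \<le> exp (C*r) * h^n / fact n"
        using Phi_bound[OF b0 lamC rK[OF z], of n] by (simp add: h_def power_divide mult.commute)
      have "norm (a n * Phi_seq lam n (z - x0)) \<le> cmod (a n) * (exp (C*r) * h^n / fact n)"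
        unfolding norm_mult using P by (intro mult_left_mono) auto
      also have "\<dots> = (cmod (a n) / fact n) * (exp (C*r) * h^n)" by simp
      also have "\<dots> \<le> (1/R1)^n * (exp (C*r) * h^n)"
        using elim h0 by (intro mult_right_mono) auto
      also have "\<dots> = M n" by (simp add: M_def q_def power_divide)
      finally show "norm (a n * Phi_seq lam n (z - x0)) \<le> M n" .
    qed
  qed
  have "uniformly_convergent_on K (\<lambda>N z. \<Sum>n<N. a n * Phi_seq lam n (z - x0))"
    by (rule Weierstrass_m_test'_ev[OF evb sM])
  moreover have "uniformly_convergent_on K (\<lambda>N z. \<Sum>n<N. cmod (a n * Phi_seq lam n (z - x0)))"
    by (rule Weierstrass_m_test'_ev[OF _ sM]) (use evb in simp)
  ultimately show "uniformly_convergent_on K (\<lambda>N z. \<Sum>n<N. cmod (a n * Phi_seq lam n (z - x0))) \<and>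
           uniformly_convergent_on K (\<lambda>N z. \<Sum>n<N. a n * Phi_seq lam n (z - x0))" by blast
qed

end
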